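(* Let $\varepsilon>0$ be such that $1/\varepsilon\ge 3$ is an integer, let $I$ be an input of offline Ordered Open End Bin Packing, and let $\mathrm{OPT}$ be an optimal solution for $I$ with cost $\mathrm{opt}$. Then there is a feasible solution $\mathrm{OPT}'$ of cost at most $(1+\varepsilon^2)\,\mathrm{opt}+1$ such that every exceeding item of a bin of $\mathrm{OPT}'$ has size at least $\varepsilon^2$.
   Context: Ordered Open End Bin Packing (offline): the input is a sequence of items $1,\dots,n$ with sizes in $(0,1]$. A feasible solution partitions the items into bins such that for every bin, the total size of all its items except the one of maximum index is strictly smaller than $1$ (i.e., items are added to a bin in index order, and an item may be added only while the bin's current total size is strictly below $1$). The cost is the number of bins. For a bin $B$ of a feasible solution, if the total size of the items in $B$ is at least $1$, the exceeding item of $B$ is the item of maximum index in $B$; if the total size of $B$ is strictly below $1$, $B$ has no exceeding item. *)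

theory Defs
  imports Complex_Main "HOL-Library.Disjoint_Sets"
begin

definition valid_input :: "nat \<Rightarrow> (nat \<Rightarrow> real) \<Rightarrow> bool" where
  "valid_input n s \<longleftrightarrow> (\<forall>i\<in>{1..n}. 0 < s i \<and> s i \<le> 1)"

definition feasible_bin :: "(nat \<Rightarrow> real) \<Rightarrow> nat set \<Rightarrow> bool" where
  "feasible_bin s B \<longleftrightarrow> (\<Sum>i\<in>B - {Max B}. s i) < 1"

definition feasible_solution :: "nat \<Rightarrow> (nat \<Rightarrow> real) \<Rightarrow> nat set set \<Rightarrow> bool" where
  "feasible_solution n s P \<longleftrightarrow> partition_on {1..n} P \<and> (\<forall>B\<in>P. feasible_bin s B)"

definition cost :: "nat set set \<Rightarrow> nat" where
  "cost P = card P"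

definition optimal_solution :: "nat \<Rightarrow> (nat \<Rightarrow> real) \<Rightarrow> nat set set \<Rightarrow> bool" where
  "optimal_solution n s P \<longleftrightarrow> feasible_solution n s P \<and>
     (\<forall>Q. feasible_solution n s Q \<longrightarrow> cost P \<le> cost Q)"

definition has_exceeding_item :: "(nat \<Rightarrow> real) \<Rightarrow> nat set \<Rightarrow> bool" where
  "has_exceeding_item s B \<longleftrightarrow> (\<Sum>i\<in>B. s i) \<ge> 1"

definition exceeding_item :: "nat set \<Rightarrow> nat" where
  "exceeding_item B = Max B"

end

theory Submission imports Defs begin

lemma chunk:
  fixes M :: "nat set" and K :: nat and s :: "nat \<Rightarrow> real"
  assumes "finite M" "K \<ge> 1" "\<forall>i\<in>M. s i < 1 / real K"
  shows "\<exists>P. partition_on M P \<and> (\<forall>A\<in>P. sum s A < 1) \<and> real (card P) \<le> real (card M) / real K + 1"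
  using assms
proof (induction "card M" arbitrary: M rule: less_induct)
  case less
  show ?case
  proof (cases "card M \<le> K")
    case True
    show ?thesis
    proof (cases "M = {}")
      case True then show ?thesis by (auto simp: partition_on_empty)
    next
      case False
      have "sum s M < sum (\<lambda>_. 1 / real K) M"
        using False less.prems by (intro sum_strict_mono) auto
      also have "\<dots> = real (card M) / real K" by simp
      also have "\<dots> \<le> 1" using True less.prems(2) by (simp add: divide_le_eq_1)
      finally show ?thesis using False
        by (intro exI[of _ "{M}"]) (auto simp: partition_on_space)
    qed
  next
    case False
    obtain A where A: "A \<subseteq> M" "card A = K" "finite A"
      using obtain_subset_with_card_n[of K M] False by auto
    have cM: "card (M - A) = card M - K" using A less.prems(1) by (simp add: card_Diff_subset)
    have "card (M - A) < card M" using cM less.prems(2) False by simp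
    then obtain P where P: "partition_on (M - A) P" "\<forall>B\<in>P. sum s B < 1"
       "real (card P) \<le> real (card (M - A)) / real K + 1"
      using less.hyps[of "M - A"] less.prems by auto
    have Ane: "A \<noteq> {}" using A less.prems(2) by auto
    have sA: "sum s A < 1"
    proof -
      have "sum s A < sum (\<lambda>_. 1 / real K) A"
        using Ane A less.prems by (intro sum_strict_mono) auto
      also have "\<dots> = 1" using A less.prems(2) by simp
      finally show ?thesis .
    qed
    have dj: "disjnt A (\<Union>P)" using partition_onD1[OF P(1)] by (auto simp: disjnt_def)
    have pi: "partition_on M (insert A P)"
      using partition_on_insert[OF dj, of M] P(1) A Ane by simp
    have fP: "finite P" using finite_elements[OF _ P(1)] less.prems(1) by auto
    have "real (card (insert A P)) \<le> real (card P) + 1" by (simp add: card_insert_if fP)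
    also have "\<dots> \<le> (real (card M) - real K) / real K + 2"
      using P(3) cM False by (simp add: of_nat_diff)
    also have "\<dots> = real (card M) / real K + 1" using less.prems(2) by (simp add: field_simps)
    finally show ?thesis using pi P(2) sA by (intro exI[of _ "insert A P"]) auto
  qed
qed

lemma small_feasible:
  assumes "valid_input n s" "X \<subseteq> {1..n}" "sum s X < 1"
  shows "feasible_bin s X" "\<not> has_exceeding_item s X"
proof -
  have "finite X" using assms(2) finite_subset by blast
  have "sum s (X - {Max X}) \<le> sum s X"
    using assms(1,2) \<open>finite X\<close> by (intro sum_mono2) (auto simp: valid_input_def less_imp_le)
  then show "feasible_bin s X" using assms(3) by (simp add: feasible_bin_def)
  show "\<not> has_exceeding_item s X" using assms(3) by (simp add: has_exceeding_item_def)
qed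

theorem mainTheorem2:
  fixes \<epsilon> :: real and n :: nat and s :: "nat \<Rightarrow> real" and OPT :: "nat set set"
  assumes "\<epsilon> > 0"
    and "\<exists>k::nat. 1 / \<epsilon> = real k \<and> k \<ge> 3"
    and "valid_input n s"
    and "optimal_solution n s OPT"
  shows "\<exists>OPT'. feasible_solution n s OPT' \<and>
           real (cost OPT') \<le> (1 + \<epsilon>^2) * real (cost OPT) + 1 \<and>
           (\<forall>B\<in>OPT'. has_exceeding_item s B \<longrightarrow> s (exceeding_item B) \<ge> \<epsilon>^2)"
proof -
  obtain k :: nat where k: "1 / \<epsilon> = real k" "k \<ge> 3" using assms(2) by blast
  define K where "K = k * k"
  have K1: "K \<ge> 1" using k(2) by (simp add: K_def)
  have eK: "\<epsilon>^2 = 1 / real K"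
  proof -
    have "\<epsilon> = 1 / real k" by (metis k(1) inverse_inverse_eq inverse_eq_divide)
    then show ?thesis by (simp add: K_def power2_eq_square)
  qed
  have feas: "feasible_solution n s OPT" using assms(4) by (simp add: optimal_solution_def)
  have part: "partition_on {1..n} OPT" and fb: "\<forall>B\<in>OPT. feasible_bin s B"
    using feas by (auto simp: feasible_solution_def)
  have finOPT: "finite OPT" using finite_elements[OF _ part] by simp
  have sub: "B \<subseteq> {1..n}" if "B \<in> OPT" for B using partition_onD1[OF part] that by auto
  have finB: "finite B" if "B \<in> OPT" for B using sub[OF that] finite_subset by blast
  have neB: "B \<noteq> {}" if "B \<in> OPT" for B using partition_onD3[OF part] that by auto
  have dis: "B \<inter> B' = {}" if "B \<in> OPT" "B' \<in> OPT" "B \<noteq> B'" for B B'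
    using partition_onD2[OF part] that by (auto simp: disjoint_def)
  define Bad where "Bad = {B\<in>OPT. 1 \<le> sum s B \<and> s (Max B) < \<epsilon>^2}"
  define f where "f B = (if B \<in> Bad then B - {Max B} else B)" for B
  define M where "M = Max ` Bad"
  have BadO: "Bad \<subseteq> OPT" by (auto simp: Bad_def)
  have MaxB: "Max B \<in> B" if "B \<in> OPT" for B using finB[OF that] neB[OF that] by simp
  have fsub: "f B \<subseteq> B" for B by (auto simp: f_def)
  have fne: "f B \<noteq> {}" if "B \<in> OPT" for B
  proof (cases "B \<in> Bad")
    case True
    show ?thesis
    proof
      assume "f B = {}"
      then have "B = {Max B}" using True MaxB[OF that] by (auto simp: f_def)
      then have "sum s B = s (Max B)" by (metis sum.empty sum.insert empty_iff finite.emptyI add.right_neutral)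
      moreover have "\<epsilon>^2 \<le> 1" using eK K1 by simp
      ultimately show False using True by (auto simp: Bad_def)
    qed
  next
    case False then show ?thesis using neB[OF that] by (simp add: f_def)
  qed
  have fM: "f B \<inter> M = {}" if "B \<in> OPT" for B
  proof -
    have "Max B' \<notin> f B" if "B' \<in> Bad" for B'
    proof (cases "B = B'")
      case True then show ?thesis using that by (simp add: f_def)
    next
      case False
      then have "B \<inter> B' = {}" using dis \<open>B \<in> OPT\<close> that BadO by auto
      then show ?thesis using MaxB[of B'] that BadO fsub[of B] by auto
    qed
    then show ?thesis by (auto simp: M_def)
  qed
  have finM: "finite M" using finOPT BadO by (simp add: M_def finite_subset)
  have Msmall: "\<forall>i\<in>M. s i < 1 / real K" using eK by (auto simp: M_def Bad_def)
  obtain P where P: "partition_on M P" "\<forall>A\<in>P. sum s A < 1"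
    "real (card P) \<le> real (card M) / real K + 1"
    using chunk[OF finM K1 Msmall] by blast
  have MO: "M \<subseteq> \<Union>OPT" using MaxB BadO by (auto simp: M_def)
  have PM: "A \<subseteq> M" if "A \<in> P" for A using partition_onD1[OF P(1)] that by auto
  define OPT' where "OPT' = f ` OPT \<union> P"
  have U: "\<Union>OPT' = {1..n}"
  proof -
    have "\<Union>OPT' = \<Union>(f ` OPT) \<union> M" using partition_onD1[OF P(1)] by (auto simp: OPT'_def)
    also have "\<dots> = \<Union>OPT"
    proof
      show "\<Union>(f ` OPT) \<union> M \<subseteq> \<Union>OPT" using fsub MO by blast
      show "\<Union>OPT \<subseteq> \<Union>(f ` OPT) \<union> M"
      proof
        fix x assume "x \<in> \<Union>OPT"
        then obtain B where B: "B \<in> OPT" "x \<in> B" by auto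
        show "x \<in> \<Union>(f ` OPT) \<union> M"
        proof (cases "B \<in> Bad \<and> x = Max B")
          case True then show ?thesis by (auto simp: M_def)
        next
          case False then have "x \<in> f B" using B by (auto simp: f_def)
          then show ?thesis using B by auto
        qed
      qed
    qed
    also have "\<dots> = {1..n}" using partition_onD1[OF part] by simp
    finally show ?thesis .
  qed
  have pOPT': "partition_on {1..n} OPT'"
  proof (rule partition_onI[OF U])
    fix p q assume pq: "p \<in> OPT'" "q \<in> OPT'" "p \<noteq> q"
    show "disjnt p q"
    proof (cases "p \<in> P")
      case pP: True
      show ?thesis
      proof (cases "q \<in> P")
        case True then show ?thesis using pP pq(3) partition_onD2[OF P(1)]
          by (auto simp: disjoint_def disjnt_def)
      next
        case False
        then obtain B where "B \<in> OPT" "q = f B" using pq by (auto simp: OPT'_def)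
        then show ?thesis using fM PM[OF pP] by (auto simp: disjnt_def)
      qed
    next
      case pnP: False
      then obtain B where B: "B \<in> OPT" "p = f B" using pq by (auto simp: OPT'_def)
      show ?thesis
      proof (cases "q \<in> P")
        case True then show ?thesis using fM[OF B(1)] B PM[OF True] by (auto simp: disjnt_def)
      next
        case False
        then obtain B' where B': "B' \<in> OPT" "q = f B'" using pq by (auto simp: OPT'_def)
        then have "B \<noteq> B'" using B pq(3) by auto
        then have "B \<inter> B' = {}" using dis B B' by auto
        then show ?thesis using fsub[of B] fsub[of B'] B B' by (auto simp: disjnt_def)
      qed
    qed
  next
    show "{} \<notin> OPT'" using fne partition_onD3[OF P(1)] by (auto simp: OPT'_def)
  qed
  have good: "feasible_bin s X \<and> (has_exceeding_item s X \<longrightarrow> s (exceeding_item X) \<ge> \<epsilon>^2)"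
    if XO: "X \<in> OPT'" for X
  proof (cases "X \<in> P")
    case True
    have "X \<subseteq> {1..n}" using U XO by auto
    then show ?thesis using small_feasible[OF assms(3)] P(2) True by blast
  next
    case False
    then obtain B where B: "B \<in> OPT" "X = f B" using XO by (auto simp: OPT'_def)
    show ?thesis
    proof (cases "B \<in> Bad")
      case True
      have "X = B - {Max B}" using True B by (simp add: f_def)
      then have "sum s X < 1" using fb B(1) by (simp add: feasible_bin_def)
      moreover have "X \<subseteq> {1..n}" using U XO by auto
      ultimately show ?thesis using small_feasible[OF assms(3)] by blast
    next
      case False
      then have "X = B" using B by (simp add: f_def)
      then show ?thesis using False B fb
        by (auto simp: Bad_def has_exceeding_item_def exceeding_item_def)
    qed
  qed
  have "card OPT' \<le> card (f ` OPT) + card P" unfolding OPT'_def by (rule card_Un_le)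
  also have "\<dots> \<le> card OPT + card P" using card_image_le[OF finOPT] by simp
  finally have c1: "real (card OPT') \<le> real (card OPT) + real (card P)" by linarith
  have "card M \<le> card Bad" unfolding M_def using finOPT BadO
    by (intro card_image_le) (auto intro: finite_subset)
  also have "\<dots> \<le> card OPT" using finOPT BadO by (intro card_mono)
  finally have "real (card M) / real K \<le> real (card OPT) / real K"
    using K1 by (simp add: divide_right_mono)
  then have "real (card OPT') \<le> real (card OPT) + \<epsilon>^2 * real (card OPT) + 1"
    using c1 P(3) eK by simp
  then have "real (cost OPT') \<le> (1 + \<epsilon>^2) * real (cost OPT) + 1"
    by (simp add: cost_def algebra_simps)
  moreover have "feasible_solution n s OPT'" using pOPT' good by (simp add: feasible_solution_def)
  ultimately show ?thesis using good by blast
qed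

end
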